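(* Let $q$ be a power of a prime $p$, let $n\geq1$, and write $2n=p^{\ell}n_0$ with integers $\ell\geq0$, $n_0>0$, $\gcd(n_0,p)=1$. Suppose $x^{n_0}-1=g_1(x)g_2(x)\cdots g_t(x)$ with $g_1,\ldots,g_t$ distinct monic irreducible polynomials in $\mathbb{F}_q[x]$ (so $x^{2n}-1=g_1(x)^{p^\ell}\cdots g_t(x)^{p^\ell}$). Then there are exactly $(p^{\ell}+1)^t$ distinct $\mathbb{F}_q$-linear additive conjucyclic codes of length $n$ over $\mathbb{F}_{q^2}$.
   Context: An $\mathbb{F}_q$-linear additive code of length $n$ over $\mathbb{F}_{q^2}$ is an $\mathbb{F}_q$-subspace of $\mathbb{F}_{q^2}^n$; it is conjucyclic if closed under $T(c_0,\ldots,c_{n-1})=(c_{n-1}^q,c_0,\ldots,c_{n-2})$. *)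

theory Defs
  imports "HOL-Computational_Algebra.Computational_Algebra" "HOL-Library.Cardinality"
begin

definition conj_shift :: "nat \<Rightarrow> 'Q::field list \<Rightarrow> 'Q list" where
  "conj_shift q c = (if c = [] then [] else (last c ^ q) # butlast c)"

text \<open>An F_q-linear additive conjucyclic code of length n over F_{q^2}: F_q is embedded
  into F_{q^2} via the field embedding emb; the code is an F_q-subspace of F_{q^2}^n
  closed under the conjucyclic shift.\<close>
definition additive_conjucyclic ::
  "('q::field \<Rightarrow> 'Q::field) \<Rightarrow> nat \<Rightarrow> nat \<Rightarrow> 'Q list set \<Rightarrow> bool" where
  "additive_conjucyclic emb q n C \<longleftrightarrow>
     C \<subseteq> {c. length c = n} \<and>
     replicate n 0 \<in> C \<and>
     (\<forall>x\<in>C. \<forall>y\<in>C. map2 (+) x y \<in> C) \<and>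
     (\<forall>a. \<forall>x\<in>C. map (\<lambda>z. emb a * z) x \<in> C) \<and>
     (\<forall>x\<in>C. conj_shift q x \<in> C)"

end

theory Submission
  imports Defs
begin



lemma ideal_gen:
  fixes I :: "'a::field poly set"
  assumes add: "\<And>x y. x \<in> I \<Longrightarrow> y \<in> I \<Longrightarrow> x + y \<in> I"
    and mul: "\<And>x c. x \<in> I \<Longrightarrow> c * x \<in> I"
    and nz: "z \<in> I" "z \<noteq> 0"
  shows "\<exists>d\<in>I. d \<noteq> 0 \<and> (\<forall>x. x \<in> I \<longleftrightarrow> d dvd x)"
proof -
  define k where "k = (LEAST k. \<exists>x\<in>I. x \<noteq> 0 \<and> degree x = k)"
  have "\<exists>x\<in>I. x \<noteq> 0 \<and> degree x = k"
    unfolding k_def by (rule LeastI[of _ "degree z"]) (use nz in auto)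
  then obtain d where d: "d \<in> I" "d \<noteq> 0" "degree d = k" by blast
  have mn: "degree d \<le> degree x" if "x \<in> I" "x \<noteq> 0" for x
    unfolding d(3) k_def by (rule Least_le) (use that in auto)
  have "x \<in> I \<longleftrightarrow> d dvd x" for x
  proof
    assume x: "x \<in> I"
    have "x + (- (x div d)) * d \<in> I" using x d by (intro add mul)
    moreover have "x + (- (x div d)) * d = x mod d"
      by (metis add_diff_cancel_left' diff_conv_add_uminus div_mult_mod_eq mult_minus_left)
    ultimately have m: "x mod d \<in> I" by simp
    show "d dvd x"
    proof (rule ccontr)
      assume "\<not> d dvd x"
      hence "x mod d \<noteq> 0" by (simp add: dvd_eq_mod_eq_0)
      hence "degree (x mod d) < degree d" using d(2) degree_mod_less' by blast
      with mn[OF m \<open>x mod d \<noteq> 0\<close>] show False by simp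
    qed
  next
    assume "d dvd x"
    then obtain c where "x = d * c" by blast
    then show "x \<in> I" using mul[OF d(1), of c] by (simp add: mult.commute)
  qed
  with d show ?thesis by blast
qed

lemma irred_bezout:
  fixes g d :: "'a::field poly"
  assumes g: "irreducible g" and nd: "\<not> g dvd d"
  shows "\<exists>u v. u * g + v * d = 1"
proof -
  define I where "I = {x. \<exists>u v. x = u * g + v * d}"
  have add: "x + y \<in> I" if "x \<in> I" "y \<in> I" for x y
  proof -
    from that obtain u v u' v' where "x = u * g + v * d" "y = u' * g + v' * d" by (auto simp: I_def)
    then have "x + y = (u + u') * g + (v + v') * d" by (simp add: algebra_simps)
    then show ?thesis by (auto simp: I_def)
  qed
  have mul: "c * x \<in> I" if "x \<in> I" for x c
  proof -
    from that obtain u v where "x = u * g + v * d" by (auto simp: I_def)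
    then have "c * x = (c * u) * g + (c * v) * d" by (simp add: algebra_simps)
    then show ?thesis by (auto simp: I_def)
  qed
  have gI: "g \<in> I" unfolding I_def by (rule CollectI, rule exI[of _ 1], rule exI[of _ 0]) simp
  have dI: "d \<in> I" unfolding I_def by (rule CollectI, rule exI[of _ 0], rule exI[of _ 1]) simp
  have "g \<noteq> 0" using g by auto
  obtain e where e: "e \<in> I" "e \<noteq> 0" "\<And>x. x \<in> I \<longleftrightarrow> e dvd x"
    using ideal_gen[of I g, OF add mul gI \<open>g \<noteq> 0\<close>] by blast
  have "e dvd g" "e dvd d" using e gI dI by auto
  then have "g dvd e \<or> is_unit e" using irreducibleD'[OF g] by blast
  moreover have "\<not> g dvd e" using \<open>e dvd d\<close> nd dvd_trans by blast
  ultimately have "is_unit e" by blast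
  then have "1 \<in> I" using e(3)[of 1] by simp  
  then show ?thesis by (auto simp: I_def)
qed

lemma irred_prime:
  fixes g a b :: "'a::field poly"
  assumes g: "irreducible g" and "g dvd a * b"
  shows "g dvd a \<or> g dvd b"
proof (cases "g dvd a")
  case False
  then obtain u v where uv: "u * g + v * a = 1" using irred_bezout[OF g] by blast
  have "b = (u * g + v * a) * b" using uv by simp
  also have "\<dots> = (u * b) * g + v * (a * b)" by (simp add: algebra_simps)
  finally have eq: "b = (u * b) * g + v * (a * b)" .
  have "g dvd v * (a * b)" using assms(2) by (rule dvd_mult)
  then have "g dvd (u * b) * g + v * (a * b)" by (intro dvd_add) simp_all
  then show ?thesis using eq by metis
qed simp

lemma irred_cancel:
  fixes g d X :: "'a::field poly"
  assumes g: "irreducible g" and nd: "\<not> g dvd d" and dv: "d dvd X * g ^ m"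
  shows "d dvd X"
  using dv
proof (induction m arbitrary: X)
  case 0 then show ?case by simp
next
  case (Suc m)
  obtain u v where uv: "u * g + v * d = 1" using irred_bezout[OF g nd] by blast
  have "X * g ^ m = X * g ^ m * (u * g + v * d)" using uv by simp
  also have "\<dots> = u * (X * g ^ Suc m) + (v * X * g ^ m) * d" by (simp add: algebra_simps)
  finally have eq: "X * g ^ m = u * (X * g ^ Suc m) + (v * X * g ^ m) * d" .
  have "d dvd u * (X * g ^ Suc m)" using Suc.prems by (rule dvd_mult)
  then have "d dvd u * (X * g ^ Suc m) + (v * X * g ^ m) * d" by (intro dvd_add) simp_all
  then have "d dvd X * g ^ m" using eq by metis
  then show ?case by (rule Suc.IH)
qed

lemma irred_decomp:
  fixes g e :: "'a::field poly"
  assumes g: "irreducible g" and e: "e \<noteq> 0"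
  shows "\<exists>j d. e = g ^ j * d \<and> \<not> g dvd d"
  using e
proof (induction "degree e" arbitrary: e rule: less_induct)
  case (less e)
  show ?case
  proof (cases "g dvd e")
    case False
    then show ?thesis by (intro exI[of _ 0] exI[of _ e]) (use False less in simp)
  next
    case True
    then obtain e' where e': "e = g * e'" by blast
    hence "e' \<noteq> 0" using less.prems by auto
    have "degree g > 0" using g
      by (metis irreducible_def is_unit_iff_degree not_gr0)
    hence "degree e' < degree e" using e' \<open>e' \<noteq> 0\<close> less.prems by (simp add: degree_mult_eq)
    then obtain j d where "e' = g ^ j * d" "\<not> g dvd d" using less.hyps \<open>e' \<noteq> 0\<close> by blast
    then show ?thesis using e' by (intro exI[of _ "Suc j"] exI[of _ d]) (simp add: mult.assoc)
  qed
qed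

lemma monic_dvd_antisym:
  fixes a b :: "'a::field poly"
  assumes "lead_coeff a = 1" "lead_coeff b = 1" "a dvd b" "b dvd a"
  shows "a = b"
proof -
  obtain c where c: "b = a * c" using assms(3) by blast
  obtain e where e: "a = b * e" using assms(4) by blast
  have a0: "a \<noteq> 0" using assms(1) by auto
  have "a * 1 = a * (c * e)" using c e by (metis mult.assoc mult_1_right)
  hence "c * e = 1" using a0 mult_left_cancel[of a "c * e" 1] by simp
  hence "is_unit c" by (metis dvdI)
  then obtain k where k: "c = [:k:]" using is_unit_poly_iff by blast
  have "lead_coeff b = lead_coeff a * k" using c k by (simp add: lead_coeff_mult)
  hence "k = 1" using assms by simp
  thus ?thesis using c k by simp
qed

lemma divisors_step:
  fixes A g :: "'a::field poly"
  assumes A: "A \<noteq> 0" and g: "irreducible g" "lead_coeff g = 1" and ng: "\<not> g dvd A"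
  shows "card {d. lead_coeff d = 1 \<and> d dvd A * g ^ m} = card {d. lead_coeff d = 1 \<and> d dvd A} * (m+1)"
proof -
  let ?D = "{d. lead_coeff d = 1 \<and> d dvd A}"
  let ?E = "{d. lead_coeff d = 1 \<and> d dvd A * g ^ m}"
  let ?h = "\<lambda>(d, j). d * g ^ j"
  have gnu: "\<not> is_unit g" "g \<noteq> 0" using g by (auto simp: irreducible_def)
  have ndv: "\<not> g dvd d" if "d \<in> ?D" for d using that ng dvd_trans by blast
  have "bij_betw ?h (?D \<times> {0..m}) ?E"
  proof (rule bij_betwI')
    fix x y assume x: "x \<in> ?D \<times> {0..m}" and y: "y \<in> ?D \<times> {0..m}"
    obtain d j where xd: "x = (d, j)" by force
    obtain d' j' where yd: "y = (d', j')" by force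
    have nd: "\<not> g dvd d" "\<not> g dvd d'" using x y xd yd ndv by auto
    show "(?h x = ?h y) = (x = y)"
    proof
      assume eq: "?h x = ?h y"
      hence eq: "d * g ^ j = d' * g ^ j'" using xd yd by simp
      have "j = j'"
      proof (rule ccontr)
        assume "j \<noteq> j'"
        then consider "j < j'" | "j' < j" by linarith
        then show False
        proof cases
          case 1
          then have "d * g ^ j = (d' * g ^ (j' - j)) * g ^ j" using eq
            by (simp add: mult.assoc flip: power_add)
          hence "d = d' * g ^ (j' - j)" using gnu by simp
          hence "g dvd d" using 1 by (simp add: dvd_power)
          thus False using nd by simp
        next
          case 2
          then have "d' * g ^ j' = (d * g ^ (j - j')) * g ^ j'" using eq
            by (simp add: mult.assoc flip: power_add)
          hence "d' = d * g ^ (j - j')" using gnu by simp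
          hence "g dvd d'" using 2 by (simp add: dvd_power)
          thus False using nd by simp
        qed
      qed
      then show "x = y" using eq gnu xd yd by simp
    qed simp
  next
    fix x assume x: "x \<in> ?D \<times> {0..m}"
    obtain d j where xd: "x = (d, j)" by force
    have "d * g ^ j dvd A * g ^ m" using x xd
      by (intro mult_dvd_mono) (auto intro: le_imp_power_dvd)
    moreover have "lead_coeff (d * g ^ j) = 1" using x xd g by (simp add: lead_coeff_mult lead_coeff_power)
    ultimately show "?h x \<in> ?E" using xd by simp
  next
    fix e assume e: "e \<in> ?E"
    have e0: "e \<noteq> 0" using e by auto
    obtain j d where d: "e = g ^ j * d" "\<not> g dvd d"
      using irred_decomp[OF g(1) e0] by blast
    have jm: "j \<le> m"
    proof (rule ccontr)
      assume "\<not> j \<le> m"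
      hence "g ^ Suc m dvd e" using d by (metis dvd_mult2 not_less_eq_eq le_imp_power_dvd)
      hence "g ^ m * g dvd g ^ m * A" using e by (metis (no_types, lifting) dvd_trans mem_Collect_eq mult.commute power_Suc2)
      hence "g dvd A" using gnu by simp
      thus False using ng by simp
    qed
    have "d dvd A * g ^ m" using e d by (metis dvd_mult_right mem_Collect_eq mult.commute)
    hence "d dvd A" using irred_cancel[OF g(1) d(2)] by blast
    moreover have "lead_coeff d = 1" using e d g by (simp add: lead_coeff_mult lead_coeff_power)
    ultimately show "\<exists>x\<in>?D \<times> {0..m}. e = ?h x" using jm d
      by (intro bexI[of _ "(d, j)"]) (auto simp: mult.commute)
  qed
  then have "card ?E = card (?D \<times> {0..m})" by (simp add: bij_betw_same_card)
  then show ?thesis by (simp add: card_cartesian_product)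
qed

lemma count_divisors:
  fixes g :: "nat \<Rightarrow> 'a::field poly"
  assumes "\<And>i. i < t \<Longrightarrow> lead_coeff (g i) = 1 \<and> irreducible (g i)"
    and "inj_on g {..<t}"
  shows "card {d. lead_coeff d = 1 \<and> d dvd (\<Prod>i<t. g i ^ m)} = (m+1) ^ t"
  using assms
proof (induction t)
  case 0
  have "{d. lead_coeff d = 1 \<and> d dvd (1 :: 'a poly)} = {1}"
    by (auto simp: is_unit_poly_iff, rule exI[of _ 1], simp add: one_pCons)
  then show ?case by simp
next
  case (Suc t)
  note P = Suc.prems
  let ?A = "\<Prod>i<t. g i ^ m"
  have ir: "irreducible (g i)" if "i < Suc t" for i
    using Suc.prems(1)[OF that] by simp
  have A0: "?A \<noteq> 0" using ir by (auto simp: irreducible_def)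
  have ndp: "\<not> g t dvd (\<Prod>i<s. g i ^ m)" if "s \<le> t" for s
    using that
  proof (induction s)
    case 0 then show ?case using ir[of t] by (auto simp: irreducible_def)
  next
    case (Suc s)
    have "\<not> g t dvd g s ^ m"
    proof
      assume "g t dvd g s ^ m"
      hence "g t dvd g s"
      proof (induction m)
        case 0 then show ?case using ir[of t] by (auto simp: irreducible_def)
      next
        case (Suc m) then show ?case using irred_prime[OF ir[of t]] by auto
      qed
      moreover have "irreducible (g s)" "lead_coeff (g s) = 1" "lead_coeff (g t) = 1"
        using P(1) Suc.prems ir by auto
      moreover have "\<not> is_unit (g t)" using ir[of t] by (simp add: irreducible_def)
      ultimately have "g s dvd g t" using irreducibleD' by blast
      hence "g t = g s" using monic_dvd_antisym \<open>g t dvd g s\<close> \<open>lead_coeff (g s) = 1\<close> \<open>lead_coeff (g t) = 1\<close> by blast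
      moreover have "s < Suc t" "t < Suc t" "s \<noteq> t" using Suc.prems by auto
      ultimately show False using P(2) unfolding inj_on_def by (metis lessThan_iff)
    qed
    then show ?case using Suc irred_prime[OF ir[of t]] by auto
  qed
  have ng: "\<not> g t dvd ?A" using ndp by simp
  have "card {d. lead_coeff d = 1 \<and> d dvd (\<Prod>i<Suc t. g i ^ m)}
      = card {d. lead_coeff d = 1 \<and> d dvd ?A * g t ^ m}" by simp
  also have "\<dots> = card {d. lead_coeff d = 1 \<and> d dvd ?A} * (m+1)"
    by (rule divisors_step[OF A0 ir[of t] _ ng]) (use Suc.prems in auto)
  also have "\<dots> = (m+1)^t * (m+1)" using Suc by (auto simp: inj_on_def)
  finally show ?case by simp
qed



locale embh =
  fixes emb :: "'q::{field,finite} \<Rightarrow> 'Q::{field,finite}"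
  assumes emb_add: "\<And>a b. emb (a + b) = emb a + emb b"
    and emb_mult: "\<And>a b. emb (a * b) = emb a * emb b"
    and emb_one: "emb 1 = 1"
    and emb_inj: "inj emb"
begin

lemma emb0 [simp]: "emb 0 = 0"
  using emb_add[of 0 0] by (metis add.right_neutral add_left_cancel)

lemma emb_neg: "emb (- a) = - emb a"
  using emb_add[of a "- a"] by (simp add: eq_neg_iff_add_eq_0 add.commute)

lemma emb_diff: "emb (a - b) = emb a - emb b"
  using emb_add[of a "- b"] emb_neg[of b] by simp

lemma emb_pow: "emb (a ^ m) = emb a ^ m"
  by (induction m) (simp_all add: emb_one emb_mult)

lemma emb_eq_iff [simp]: "emb a = emb b \<longleftrightarrow> a = b"
  using emb_inj by (auto simp: inj_def)

lemma emb_eq0_iff [simp]: "emb a = 0 \<longleftrightarrow> a = 0"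
  using emb_eq_iff[of a 0] by simp

end

locale cc = embh emb for emb :: "'q::{field,finite} \<Rightarrow> 'Q::{field,finite}" +
  fixes q n :: nat and w :: 'Q
  assumes n1: "n \<ge> 1"
    and frobq: "\<And>c::'q. c ^ q = c"
    and frobQ: "\<And>x y::'Q. (x + y) ^ q = x ^ q + y ^ q"
    and wqq: "(w ^ q) ^ q = w"
    and indep: "\<And>a b. emb a * w + emb b * w ^ q = 0 \<Longrightarrow> a = 0 \<and> b = 0"
    and cardQ: "CARD('Q) = CARD('q) * CARD('q)"
begin

definition L :: "'q \<Rightarrow> 'q \<Rightarrow> 'Q" where "L a b = emb a * w + emb b * w ^ q"

lemma L_inj: "L a b = L a' b' \<Longrightarrow> a = a' \<and> b = b'"
proof -
  assume "L a b = L a' b'"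
  hence h: "emb (a - a') * w + emb (b - b') * w ^ q = 0"
    by (simp add: L_def emb_diff algebra_simps)
  show ?thesis using indep[OF h] by simp
qed

lemma L_surj: "\<exists>a b. L a b = y"
proof -
  have inj: "inj (\<lambda>(a, b). L a b)" by (auto simp: inj_on_def dest: L_inj)
  have "card (range (\<lambda>(a, b). L a b)) = CARD('q \<times> 'q)" by (rule card_image[OF inj])
  also have "\<dots> = CARD('Q)" by (simp add: cardQ card_prod)
  finally have "range (\<lambda>(a, b). L a b) = UNIV"
    by (intro card_subset_eq) auto
  then have "y \<in> range (\<lambda>(a, b). L a b)" by simp
  then show ?thesis by auto
qed

lemma L_pow: "(L a b) ^ q = L b a"
proof -
  have "(L a b) ^ q = (emb a * w) ^ q + (emb b * w ^ q) ^ q" by (simp add: L_def frobQ)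
  also have "\<dots> = emb (a ^ q) * w ^ q + emb (b ^ q) * (w ^ q) ^ q"
    by (simp add: power_mult_distrib emb_pow)
  also have "\<dots> = L b a" by (simp add: frobq wqq L_def add.commute)
  finally show ?thesis .
qed

lemma L_add: "L a b + L a' b' = L (a + a') (b + b')"
  by (simp add: L_def emb_add algebra_simps)

lemma L_smult: "emb c * L a b = L (c * a) (c * b)"
  by (simp add: L_def emb_mult algebra_simps)

lemma L_00 [simp]: "L 0 0 = 0" by (simp add: L_def)

definition ff :: "'q poly" where "ff = monom 1 (2 * n) - 1"

lemma coeff_ff: "coeff ff i = (if i = 2 * n then 1 else if i = 0 then -1 else 0)"
  using n1 by (auto simp: ff_def coeff_monom)

lemma ff_nz: "ff \<noteq> 0"
proof
  assume "ff = 0"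
  then have "coeff ff (2 * n) = 0" by simp
  then show False using n1 by (simp add: coeff_ff)
qed

lemma deg_ff: "degree ff = 2 * n"
proof (rule antisym)
  show "degree ff \<le> 2 * n" by (rule degree_le) (auto simp: coeff_ff)
  show "2 * n \<le> degree ff" by (rule le_degree) (simp add: coeff_ff)
qed

lemma red: "(\<And>i. i \<ge> 2 * n \<Longrightarrow> coeff a i = 0) \<Longrightarrow> a mod ff = a"
proof -
  assume h: "\<And>i. i \<ge> 2 * n \<Longrightarrow> coeff a i = 0"
  have "degree a \<le> 2 * n - 1" by (rule degree_le) (use h in auto)
  then have "degree a < degree ff" using n1 deg_ff by simp
  then show ?thesis by (rule mod_poly_less)
qed

lemma coeff_mod: "i \<ge> 2 * n \<Longrightarrow> coeff (a mod ff) i = 0"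
proof (cases "a mod ff = 0")
  case False
  then have "degree (a mod ff) < 2 * n" using degree_mod_less'[OF ff_nz False] deg_ff by simp
  then show "i \<ge> 2 * n \<Longrightarrow> ?thesis" by (intro coeff_eq_0) simp
qed simp

definition Phi :: "'q poly \<Rightarrow> 'Q list" where
  "Phi a = map (\<lambda>j. L (coeff (a mod ff) j) (coeff (a mod ff) (n + j))) [0..<n]"

lemma Phi_len [simp]: "length (Phi a) = n"
  by (simp add: Phi_def)

lemma Phi_nth: "j < n \<Longrightarrow> Phi a ! j = L (coeff (a mod ff) j) (coeff (a mod ff) (n + j))"
  by (simp add: Phi_def)

lemma mod_add: "(a + b) mod ff = a mod ff + b mod ff"
proof -
  have "(a + b) mod ff = (a mod ff + b mod ff) mod ff" by (simp add: mod_add_eq)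
  also have "\<dots> = a mod ff + b mod ff" by (rule red) (simp add: coeff_mod)
  finally show ?thesis .
qed

lemma Phi_add: "Phi (a + b) = map2 (+) (Phi a) (Phi b)"
  by (rule nth_equalityI) (simp_all add: Phi_nth mod_add L_add)

lemma Phi_smult: "Phi (smult c a) = map (\<lambda>z. emb c * z) (Phi a)"
  by (rule nth_equalityI) (simp_all add: Phi_nth mod_smult_left L_smult)

lemma Phi_0: "Phi 0 = replicate n 0"
  by (rule nth_equalityI) (simp_all add: Phi_nth)

lemma Phi_eq: "Phi a = Phi b \<longleftrightarrow> a mod ff = b mod ff"
proof
  assume eq: "Phi a = Phi b"
  show "a mod ff = b mod ff"
  proof (rule poly_eqI)
    fix i
    consider "i < n" | "n \<le> i" "i < 2 * n" | "2 * n \<le> i" by linarith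
    then show "coeff (a mod ff) i = coeff (b mod ff) i"
    proof cases
      case 1
      then show ?thesis using eq Phi_nth[OF 1, of a] Phi_nth[OF 1, of b] L_inj by metis
    next
      case 2
      define j where "j = i - n"
      have j: "j < n" "i = n + j" using 2 by (auto simp: j_def)
      then show ?thesis using eq Phi_nth[OF j(1), of a] Phi_nth[OF j(1), of b] L_inj by metis
    next
      case 3
      then show ?thesis by (simp add: coeff_mod)
    qed
  qed
next
  assume "a mod ff = b mod ff"
  then show "Phi a = Phi b" by (simp add: Phi_def)
qed

lemma Phi_surj: "length c = n \<Longrightarrow> \<exists>a. Phi a = c"
proof -
  assume len: "length c = n"
  have "\<forall>j. \<exists>ab. L (fst ab) (snd ab) = c ! j" using L_surj by auto
  then obtain h where h: "\<And>j. L (fst (h j)) (snd (h j)) = c ! j" by metis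
  define xs where "xs = map (\<lambda>j. fst (h j)) [0..<n] @ map (\<lambda>j. snd (h j)) [0..<n]"
  define a where "a = Poly xs"
  have len_xs: "length xs = 2 * n" by (simp add: xs_def)
  have ca: "coeff a i = nth_default 0 xs i" for i by (simp add: a_def)
  have amod: "a mod ff = a"
    by (rule red) (simp add: ca nth_default_def len_xs)
  have "Phi a = c"
  proof (rule nth_equalityI)
    show "length (Phi a) = length c" using len by simp
  next
    fix j assume "j < length (Phi a)"
    then have j: "j < n" by simp
    have "coeff a j = fst (h j)" using j by (simp add: ca nth_default_def len_xs xs_def nth_append)
    moreover have "coeff a (n + j) = snd (h j)" using j by (simp add: ca nth_default_def len_xs xs_def nth_append)
    ultimately show "Phi a ! j = c ! j" using j h by (simp add: Phi_nth amod)
  qed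
  then show ?thesis by blast
qed

lemma pCons0: "pCons 0 a = [:0, 1:] * (a :: 'q poly)"
  by simp

lemma Phi_shift: "Phi (pCons 0 a) = conj_shift q (Phi a)"
proof -
  define r where "r = a mod ff"
  define c where "c = coeff r (2 * n - 1)"
  define r' where "r' = pCons 0 r - smult c ff"
  have cr': "coeff r' i = (if i = 0 then c else if i < 2 * n then coeff r (i - 1) else 0)" for i
  proof (cases i)
    case 0
    then show ?thesis using n1 by (simp add: r'_def coeff_ff)
  next
    case (Suc i')
    have "i' = 2 * n - 1" if "Suc i' = 2 * n" using that by simp
    then show ?thesis using n1 Suc
      by (auto simp: r'_def coeff_ff c_def r_def coeff_mod)
  qed
  have r'mod: "r' mod ff = r'" by (rule red) (use n1 in \<open>simp add: cr'\<close>)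
  have "pCons 0 a mod ff = ([:0, 1:] * a) mod ff" by simp
  also have "\<dots> = ([:0, 1:] * r) mod ff" unfolding r_def by (rule mod_mult_right_eq[symmetric])
  also have "[:0, 1:] * r = r' + smult c ff" by (simp add: r'_def)
  also have "(r' + smult c ff) mod ff = r'"
    using r'mod by (simp add: mod_add_eq[symmetric] mod_smult_left)
  finally have pm: "pCons 0 a mod ff = r'" .
  have ne: "Phi a \<noteq> []" using n1 by (auto simp: Phi_def)
  show ?thesis
  proof (rule nth_equalityI)
    show "length (Phi (pCons 0 a)) = length (conj_shift q (Phi a))"
      using ne n1 by (simp add: conj_shift_def)
  next
    fix j assume "j < length (Phi (pCons 0 a))"
    then have j: "j < n" by simp
    show "Phi (pCons 0 a) ! j = conj_shift q (Phi a) ! j"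
    proof (cases j)
      case 0
      have "last (Phi a) = Phi a ! (n - 1)" using ne by (simp add: last_conv_nth)
      also have "\<dots> = L (coeff r (n - 1)) (coeff r (2 * n - 1))"
        using n1 by (simp add: Phi_nth r_def mult_2)
      finally have "conj_shift q (Phi a) ! 0 = L (coeff r (2 * n - 1)) (coeff r (n - 1))"
        using ne by (simp add: conj_shift_def L_pow)
      moreover have "Phi (pCons 0 a) ! 0 = L c (coeff r (n - 1))"
        using n1 by (simp add: Phi_nth pm cr')
      ultimately show ?thesis using 0 by (simp add: c_def)
    next
      case (Suc j')
      have "conj_shift q (Phi a) ! j = butlast (Phi a) ! j'" using ne Suc by (simp add: conj_shift_def)
      also have "\<dots> = Phi a ! j'" using Suc j by (simp add: nth_butlast)
      also have "\<dots> = L (coeff r j') (coeff r (n + j'))" using Suc j by (simp add: Phi_nth r_def)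
      finally show ?thesis using Suc j by (simp add: Phi_nth pm cr')
    qed
  qed
qed

end



lemma ac_len: "additive_conjucyclic emb q n C \<Longrightarrow> x \<in> C \<Longrightarrow> length x = n"
  unfolding additive_conjucyclic_def by blast
lemma ac_0: "additive_conjucyclic emb q n C \<Longrightarrow> replicate n 0 \<in> C"
  unfolding additive_conjucyclic_def by blast
lemma ac_add: "additive_conjucyclic emb q n C \<Longrightarrow> x \<in> C \<Longrightarrow> y \<in> C \<Longrightarrow> map2 (+) x y \<in> C"
  unfolding additive_conjucyclic_def by blast
lemma ac_smult: "additive_conjucyclic emb q n C \<Longrightarrow> x \<in> C \<Longrightarrow> map (\<lambda>z. emb a * z) x \<in> C"
  unfolding additive_conjucyclic_def by blast
lemma ac_shift: "additive_conjucyclic emb q n C \<Longrightarrow> x \<in> C \<Longrightarrow> conj_shift q x \<in> C"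
  unfolding additive_conjucyclic_def by blast

context cc
begin

lemma code_of_div: "additive_conjucyclic emb q n (Phi ` {a. d dvd a})"
  unfolding additive_conjucyclic_def
proof (intro conjI ballI allI)
  show "Phi ` {a. d dvd a} \<subseteq> {c. length c = n}" by auto
  show "replicate n 0 \<in> Phi ` {a. d dvd a}"
    by (rule image_eqI[of _ _ 0]) (simp_all add: Phi_0)
next
  fix x y assume "x \<in> Phi ` {a. d dvd a}" "y \<in> Phi ` {a. d dvd a}"
  then obtain a b where ab: "x = Phi a" "d dvd a" "y = Phi b" "d dvd b" by auto
  show "map2 (+) x y \<in> Phi ` {a. d dvd a}"
    by (rule image_eqI[of _ _ "a + b"]) (use ab in \<open>simp_all add: Phi_add\<close>)
next
  fix c x assume "x \<in> Phi ` {a. d dvd a}"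
  then obtain a where ab: "x = Phi a" "d dvd a" by auto
  show "map (\<lambda>z. emb c * z) x \<in> Phi ` {a. d dvd a}"
    by (rule image_eqI[of _ _ "smult c a"]) (use ab in \<open>simp_all add: Phi_smult dvd_smult\<close>)
next
  fix x assume "x \<in> Phi ` {a. d dvd a}"
  then obtain a where ab: "x = Phi a" "d dvd a" by auto
  have "d dvd pCons 0 a" using ab(2) by (subst pCons0) (rule dvd_mult)
  then show "conj_shift q x \<in> Phi ` {a. d dvd a}"
    by (intro image_eqI[of _ _ "pCons 0 a"]) (use ab in \<open>simp_all add: Phi_shift\<close>)
qed

lemma ideal_mul:
  assumes C: "additive_conjucyclic emb q n C" and x: "Phi x \<in> C"
  shows "Phi (c * x) \<in> C"
proof (induction c rule: pCons_induct)
  case 0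
  then show ?case using ac_0[OF C] by (simp add: Phi_0)
next
  case (pCons a p)
  have "Phi (pCons a p * x) = map2 (+) (map (\<lambda>z. emb a * z) (Phi x)) (conj_shift q (Phi (p * x)))"
    by (simp add: Phi_add Phi_smult Phi_shift)
  also have "\<dots> \<in> C" by (intro ac_add[OF C] ac_smult[OF C] ac_shift[OF C] x pCons.IH)
  finally show ?case .
qed

lemma card_codes:
  "card {C. additive_conjucyclic emb q n C} = card {d. lead_coeff d = 1 \<and> d dvd ff}"
proof -
  let ?D = "{d. lead_coeff d = 1 \<and> d dvd ff}"
  let ?h = "\<lambda>d. Phi ` {a. d dvd a}"
  have "bij_betw ?h ?D {C. additive_conjucyclic emb q n C}"
  proof (rule bij_betwI')
    have half: "d dvd d'" if eq: "?h d = ?h d'" and d: "d \<in> ?D" for d d'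
    proof -
      have "Phi d' \<in> ?h d'" by auto
      then have "Phi d' \<in> ?h d" using eq by simp
      then obtain a where a: "d dvd a" "Phi d' = Phi a" by auto
      then have "ff dvd d' - a" by (simp add: Phi_eq mod_eq_dvd_iff)
      then have "d dvd d' - a" using d dvd_trans by blast
      then have "d dvd (d' - a) + a" using a(1) by (rule dvd_add)
      then show ?thesis by simp
    qed
    fix d d' assume d: "d \<in> ?D" and d': "d' \<in> ?D"
    show "(?h d = ?h d') = (d = d')"
    proof
      assume eq: "?h d = ?h d'"
      have "d dvd d'" using half[OF eq d] .
      moreover have "d' dvd d" using half[OF eq[symmetric] d'] .
      ultimately show "d = d'" using d d' monic_dvd_antisym by blast
    qed simp
  next
    fix d assume "d \<in> ?D"
    show "?h d \<in> {C. additive_conjucyclic emb q n C}" using code_of_div by simp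
  next
    fix C assume "C \<in> {C. additive_conjucyclic emb q n C}"
    then have C: "additive_conjucyclic emb q n C" by simp
    define I where "I = {a. Phi a \<in> C}"
    have add: "x + y \<in> I" if "x \<in> I" "y \<in> I" for x y
      using that ac_add[OF C] unfolding I_def by (simp add: Phi_add)
    have mul: "c * x \<in> I" if "x \<in> I" for x c
      using that ideal_mul[OF C] unfolding I_def by simp
    have "Phi ff = Phi 0" by (simp add: Phi_eq)
    then have ffI: "ff \<in> I" using ac_0[OF C] unfolding I_def by (simp add: Phi_0)
    obtain d0 where d0: "d0 \<in> I" "d0 \<noteq> 0" "\<And>x. x \<in> I \<longleftrightarrow> d0 dvd x"
      using ideal_gen[of I ff, OF add mul ffI ff_nz] by blast
    define d where "d = smult (inverse (lead_coeff d0)) d0"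
    have dd: "d dvd x \<longleftrightarrow> d0 dvd x" for x
      using d0(2) by (simp add: d_def smult_dvd_iff)
    have dl: "lead_coeff d = 1" using d0(2) by (simp add: d_def)
    have dD: "d \<in> ?D" using dl dd d0(3) ffI by simp
    have "?h d = C"
    proof
      show "?h d \<subseteq> C" using dd d0(3) unfolding I_def by auto
      show "C \<subseteq> ?h d"
      proof
        fix c assume c: "c \<in> C"
        then have "length c = n" using ac_len[OF C] by blast
        then obtain a where a: "Phi a = c" using Phi_surj by blast
        then have "a \<in> I" using c unfolding I_def by simp
        then show "c \<in> ?h d" using a dd d0(3) by auto
      qed
    qed
    then show "\<exists>d\<in>?D. C = ?h d" using dD by blast
  qed
  then show ?thesis by (simp add: bij_betw_same_card)
qed

end



lemma fpow: "(x :: 'a::{field,finite}) ^ CARD('a) = x"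
proof (cases "x = 0")
  case False
  have "x * (\<Prod>y\<in>UNIV-{0}. x * y) = x * x ^ (card (UNIV :: 'a set) - 1) * \<Prod>(UNIV-{0})"
    by (simp add: prod.distrib mult_ac)
  also have "x * x ^ (card (UNIV :: 'a set) - 1) = x ^ Suc (card (UNIV :: 'a set) - 1)"
    by (subst power_Suc) auto
  also have "Suc (card (UNIV :: 'a set) - 1) = card (UNIV :: 'a set)"
    using finite_UNIV_card_ge_0[where ?'a = 'a] by simp
  also have "(\<Prod>y\<in>UNIV-{0}. x * y) = (\<Prod>y\<in>UNIV-{0}. y)"
    by (rule prod.reindex_bij_witness[of _ "\<lambda>y. y / x" "\<lambda>y. x * y"]) (use False in auto)
  finally show ?thesis
    by simp
qed (use finite_UNIV_card_ge_0[where ?'a = 'a] in auto)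

lemma of_nat_card_zero: "of_nat CARD('a::{ring_1,finite}) = (0::'a)"
proof -
  have "(\<Sum>x\<in>UNIV. x + 1) = (\<Sum>x\<in>UNIV. (x::'a))"
    by (rule sum.reindex_bij_witness[of _ "\<lambda>x. x - 1" "\<lambda>x. x + 1"]) auto
  hence "(\<Sum>x\<in>UNIV. x) + of_nat CARD('a) = (\<Sum>x\<in>UNIV. (x::'a))" by (simp add: sum.distrib)
  thus ?thesis by simp
qed

lemma char_eq:
  assumes p: "prime p" and c: "CARD('a::{field,finite}) = p ^ e"
  shows "CHAR('a) = p"
proof -
  have pos: "CHAR('a) > 0" by (rule finite_imp_CHAR_pos) simp
  have pr: "prime CHAR('a)" using prime_CHAR_semidom[OF pos] .
  have "CHAR('a) dvd CARD('a)" using of_nat_card_zero[where 'a='a] of_nat_eq_0_iff_char_dvd by blast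
  then have "CHAR('a) dvd p ^ e" using c by simp
  then have "CHAR('a) dvd p" using pr prime_dvd_power by blast
  then show ?thesis using pr p primes_dvd_imp_eq by blast
qed

lemma exists_w:
  fixes q :: nat
  assumes q2: "q \<ge> 2" and cQ: "CARD('Q::{field,finite}) = q * q"
    and c2: "q = 2 \<Longrightarrow> (\<forall>x::'Q. - x = x)"
  shows "\<exists>w::'Q. w ^ q \<noteq> w \<and> w ^ q \<noteq> - w"
proof (rule ccontr)
  assume "\<not> ?thesis"
  then have all: "UNIV \<subseteq> {x::'Q. x ^ q = x} \<union> {x. x ^ q = - x}" by auto
  let ?P = "monom (1::'Q) q - [:0, 1:]"
  let ?R = "monom (1::'Q) q + [:0, 1:]"
  have c01: "coeff [:0, 1::'Q:] q = 0" using q2 by (simp add: coeff_pCons split: nat.split)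
  have cP: "coeff ?P q = 1" "coeff ?R q = 1" using c01 by (simp_all add: coeff_monom)
  have P0: "?P \<noteq> 0" "?R \<noteq> 0" by (metis cP(1) coeff_0 zero_neq_one) (metis cP(2) coeff_0 zero_neq_one)
  have dP1: "degree ?P \<le> q"
    by (rule degree_le) (use q2 in \<open>auto simp: coeff_monom coeff_pCons split: nat.split\<close>)
  have dP2: "degree ?R \<le> q"
    by (rule degree_le) (use q2 in \<open>auto simp: coeff_monom coeff_pCons split: nat.split\<close>)
  note dP = dP1 dP2
  have A: "{x::'Q. x ^ q = x} = {x. poly ?P x = 0}" by (auto simp: poly_monom)
  have B: "{x::'Q. x ^ q = - x} = {x. poly ?R x = 0}" by (auto simp: poly_monom eq_neg_iff_add_eq_0)
  have cA: "card {x::'Q. x ^ q = x} \<le> q" unfolding A using card_poly_roots_bound[OF P0(1)] dP(1) by linarith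
  have cB: "card {x::'Q. x ^ q = - x} \<le> q" unfolding B using card_poly_roots_bound[OF P0(2)] dP(2) by linarith
  show False
  proof (cases "q = 2")
    case True
    then have "{x::'Q. x ^ q = - x} = {x. x ^ q = x}" using c2 by auto
    then have "UNIV \<subseteq> {x::'Q. x ^ q = x}" using all by auto
    then have "CARD('Q) \<le> card {x::'Q. x ^ q = x}" by (intro card_mono) auto
    then show False using cA cQ True by simp
  next
    case False
    then have q3: "q \<ge> 3" using q2 by simp
    have "CARD('Q) \<le> card ({x::'Q. x ^ q = x} \<union> {x. x ^ q = - x})" using all by (intro card_mono) auto
    also have "\<dots> \<le> q + q" using card_Un_le[of "{x::'Q. x ^ q = x}" "{x. x ^ q = - x}"] cA cB by linarith
    finally have "q * q \<le> q + q" using cQ by simp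
    moreover have "3 * q \<le> q * q" using q3 by simp
    ultimately show False using q2 by linarith
  qed
qed

context embh
begin

lemma indep_w:
  fixes q :: nat and w :: 'Q
  assumes frobq: "\<And>c::'q. c ^ q = c" and wqq: "(w ^ q) ^ q = w"
    and n1: "w ^ q \<noteq> w" and n2: "w ^ q \<noteq> - w"
    and eq: "emb a * w + emb b * w ^ q = 0"
  shows "a = 0 \<and> b = 0"
proof -
  have w0: "w \<noteq> 0"
  proof
    assume "w = 0"
    then show False using wqq n1 by (cases "q = 0") auto
  qed
  show ?thesis
  proof (cases "b = 0")
    case True
    then have "emb a * w = 0" using eq by simp
    then show ?thesis using True w0 by simp
  next
    case False
    define c where "c = - (inverse b * a)"
    have ib: "emb (inverse b) * emb b = 1" using False by (simp flip: emb_mult add: emb_one)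
    have "emb (inverse b) * (emb a * w + emb b * w ^ q) = emb (inverse b) * emb a * w + (emb (inverse b) * emb b) * w ^ q"
      by (simp add: algebra_simps)
    then have "emb (inverse b) * emb a * w + w ^ q = 0" using eq ib by simp
    then have wq: "w ^ q = emb c * w" by (simp add: c_def emb_neg emb_mult eq_neg_iff_add_eq_0 add.commute)
    have "w = (emb c * w) ^ q" using wqq wq by simp
    also have "\<dots> = emb (c ^ q) * w ^ q" by (simp add: power_mult_distrib emb_pow)
    also have "\<dots> = emb (c * c) * w" using frobq wq by (simp add: emb_mult)
    finally have "1 * w = emb (c * c) * w" by simp
    then have "emb (c * c) = emb 1" using w0 by (simp add: emb_one)
    then have "c * c = 1" by simp
    then have "(c - 1) * (c + 1) = 0" by (simp add: algebra_simps)
    then have "c = 1 \<or> c = - 1" by (simp add: eq_neg_iff_add_eq_0)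
    then show ?thesis
    proof
      assume "c = 1" then show ?thesis using wq n1 by (simp add: emb_one)
    next
      assume "c = - 1" then show ?thesis using wq n2 by (simp add: emb_one emb_neg)
    qed
  qed
qed

end




theorem theorem4p1:
  fixes emb :: "'q::{field,finite} \<Rightarrow> 'Q::{field,finite}"
    and p q k n l n0 t :: nat
    and g :: "nat \<Rightarrow> 'q poly"
  assumes "prime p" and "k \<ge> 1" and "q = p ^ k"
    and "CARD('q) = q" and "CARD('Q) = q ^ 2"
    and "inj emb"
    and "\<And>a b. emb (a + b) = emb a + emb b"
    and "\<And>a b. emb (a * b) = emb a * emb b"
    and "emb 1 = 1"
    and "n \<ge> 1"
    and "2 * n = p ^ l * n0" and "n0 > 0" and "coprime n0 p"
    and "\<And>i. i < t \<Longrightarrow> lead_coeff (g i) = 1 \<and> irreducible (g i)"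
    and "inj_on g {..<t}"
    and "(\<Prod>i<t. g i) = monom 1 n0 - 1"
  shows "card {C. additive_conjucyclic emb q n C} = (p ^ l + 1) ^ t"
proof -
  note pr = assms(1)
  have p2: "p \<ge> 2" using pr prime_ge_2_nat by blast
  have qp: "p \<le> q" using assms(2,3) p2 by (metis power_increasing power_one_right one_le_numeral order_trans)
  have q2: "q \<ge> 2" using p2 qp by linarith
  have cq: "CHAR('q) = p" using char_eq[OF pr, of k] assms(3,4) by simp
  have cardQ': "CARD('Q) = p ^ (k * 2)" using assms(3,5) by (simp add: power_mult)
  have cQ: "CHAR('Q) = p" using char_eq[OF pr cardQ'] .
  have frobq: "\<And>c::'q. c ^ q = c" using fpow[where 'a='q] assms(4) by simp
  have frobQ: "\<And>x y::'Q. (x + y) ^ q = x ^ q + y ^ q"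
    using freshmans_dream'[where 'a='Q, of q k] cQ pr assms(3) by simp
  have c2: "\<forall>x::'Q. - x = x" if "q = 2"
  proof
    fix x :: 'Q
    have "p = 2" using qp p2 that by linarith
    then have "(of_nat 2 :: 'Q) = 0" using cQ of_nat_CHAR[where 'a='Q] by simp
    then have "x + x = 0" by (metis mult_2 mult_zero_left of_nat_numeral)
    then show "- x = x" by (simp add: eq_neg_iff_add_eq_0)
  qed
  have cQq: "CARD('Q) = q * q" using assms(5) by (simp add: power2_eq_square)
  obtain w :: 'Q where w: "w ^ q \<noteq> w" "w ^ q \<noteq> - w" using exists_w[OF q2 cQq c2] by blast
  have wqq: "(w ^ q) ^ q = w" using fpow[where 'a='Q, of w] cQq by (simp flip: power_mult)
  interpret E: embh emb by unfold_locales (use assms(6-9) in auto)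
  have indep: "a = 0 \<and> b = 0" if "emb a * w + emb b * w ^ q = 0" for a b
    using E.indep_w[OF frobq wqq w that] .
  interpret C: cc emb q n w
    by unfold_locales (use assms(10) frobq frobQ wqq indep cQq assms(4) in auto)
  define P where "P = p ^ l"
  have Ppos: "P > 0" using p2 by (simp add: P_def)
  have fr: "(x + y) ^ P = x ^ P + y ^ P" for x y :: "'q poly"
    using freshmans_dream'[where 'a="'q poly", of P l] cq pr by (simp add: P_def)
  have m1: "(- 1 :: 'q poly) ^ P = - 1"
  proof -
    have "((- 1) + 1 :: 'q poly) ^ P = (- 1) ^ P + 1 ^ P" by (rule fr)
    then have "0 = (- 1) ^ P + (1 :: 'q poly)" using Ppos by (simp add: power_0_left)
    then show ?thesis by (simp add: eq_neg_iff_add_eq_0)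
  qed
  have "C.ff = monom 1 (2 * n) - 1" by (simp add: C.ff_def)
  also have "\<dots> = monom 1 (n0 * P) - 1"
    using assms(11) by (simp add: P_def mult.commute)
  also have "\<dots> = (monom 1 n0) ^ P + (- 1) ^ P"
    by (simp add: m1 monom_power)
  also have "\<dots> = (monom 1 n0 + (- 1)) ^ P" by (rule fr[symmetric])
  also have "\<dots> = (monom 1 n0 - 1) ^ P" by simp
  also have "\<dots> = (\<Prod>i<t. g i ^ P)" by (simp add: assms(16) flip: prod_power_distrib)
  finally have ffe: "C.ff = (\<Prod>i<t. g i ^ P)" .
  have "card {C. additive_conjucyclic emb q n C} = card {d. lead_coeff d = 1 \<and> d dvd C.ff}"
    by (rule C.card_codes)
  also have "\<dots> = (P + 1) ^ t" unfolding ffe by (rule count_divisors[OF assms(14,15)])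
  finally show ?thesis by (simp add: P_def)
qed



end
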